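(* There exist a constant $c>0$ and a sequence of sets $S_k\subseteq\mathbb{N}$ ($k\geq 1$) with $|S_k|=k+2$ such that $z_{S_k}\geq c\sqrt{k}$ for all sufficiently large $k$.
   Context: $\mathbb{N}=\{0,1,2,\dots\}$. For a finite nonempty set $S=\{e_1,\dots,e_k\}\subseteq\mathbb{N}$ (distinct elements), let $f_S(x)=\sum_{i=1}^k a_i x^{e_i}$, where $a_1,\dots,a_k$ are independent standard normal random variables. For an open interval $I\subseteq(0,\infty)$, $z_S^I$ denotes the expected number of zeros of $f_S$ in $I$, and $z_S:=z_S^{(0,1)}$. *)

theory Defs
  imports "HOL-Probability.Probability"
begin

definition std_normal :: "real measure" where
  "std_normal = density lborel std_normal_density"

definition coeff_space :: "nat set \<Rightarrow> (nat \<Rightarrow> real) measure" where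
  "coeff_space S = PiM S (\<lambda>_. std_normal)"

definition rand_poly :: "nat set \<Rightarrow> (nat \<Rightarrow> real) \<Rightarrow> real \<Rightarrow> real" where
  "rand_poly S a x = (\<Sum>e\<in>S. a e * x ^ e)"

text \<open>Expected number of zeros of f_S in the interval I (as an extended nonnegative real).
  The event that f_S is identically zero (infinitely many zeros) has probability zero.\<close>
definition exp_zeros_in :: "nat set \<Rightarrow> real set \<Rightarrow> ennreal" where
  "exp_zeros_in S I = (\<integral>\<^sup>+ a. ennreal (real (card {x\<in>I. rand_poly S a x = 0})) \<partial>coeff_space S)"

definition exp_zeros :: "nat set \<Rightarrow> ennreal" where
  "exp_zeros S = exp_zeros_in S {0<..<1}"

end

theory Submission
  imports Defs "HOL-Computational_Algebra.Polynomial"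
begin

lemma std_normal_alt: "std_normal = density lborel (normal_density 0 1)"
  unfolding std_normal_def by (simp add: std_normal_density_def normal_density_def)

lemma prob_N: "prob_space std_normal"
  unfolding std_normal_alt by (rule prob_space_normal_density) simp

lemma sets_N [measurable_cong, simp]: "sets std_normal = sets borel"
  unfolding std_normal_def by simp

lemma space_N [simp]: "space std_normal = UNIV"
  unfolding std_normal_def by simp

lemma prob_P: "prob_space (coeff_space S)"
  unfolding coeff_space_def by (intro prob_space_PiM prob_N)

lemma distr_coord:
  assumes "i \<in> S"
  shows "distr (coeff_space S) std_normal (\<lambda>a. a i) = std_normal"
  unfolding coeff_space_def using assms by (intro distr_PiM_component prob_N)

lemma indep_coord:
  assumes "finite S"
  shows "prob_space.indep_vars (coeff_space S) (\<lambda>_. borel) (\<lambda>i a. a i) S"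
proof (cases "S = {}")
  case True
  show ?thesis
    by (subst prob_space.indep_vars_def [OF prob_P],
        subst prob_space.indep_sets_def [OF prob_P]) (simp_all add: True)
next
  case False
  have "prob_space.indep_vars (coeff_space S) (\<lambda>_. std_normal) (\<lambda>i a. a i) S"
  proof (subst prob_space.indep_vars_iff_distr_eq_PiM'[OF prob_P False])
    show "\<And>i. i \<in> S \<Longrightarrow> (\<lambda>a. a i) \<in> measurable (coeff_space S) std_normal"
      unfolding coeff_space_def by measurable
    have "distr (coeff_space S) (Pi\<^sub>M S (\<lambda>i. std_normal)) (\<lambda>x. restrict x S)
        = distr (coeff_space S) (coeff_space S) (\<lambda>x. x)"
      by (rule distr_cong) (auto simp: coeff_space_def space_PiM)
    also have "\<dots> = coeff_space S" by simp
    also have "\<dots> = (\<Pi>\<^sub>M i\<in>S. distr (coeff_space S) std_normal (\<lambda>a. a i))"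
      unfolding coeff_space_def
      by (intro PiM_cong refl) (simp add: distr_coord[unfolded coeff_space_def])
    finally show "distr (coeff_space S) (Pi\<^sub>M S (\<lambda>i. std_normal)) (\<lambda>x. restrict x S)
        = (\<Pi>\<^sub>M i\<in>S. distr (coeff_space S) std_normal (\<lambda>a. a i))" .
  qed
  then show ?thesis
    by (rule prob_space.indep_vars_compose2[OF prob_P, where Y="\<lambda>_ x. x"]) simp
qed

lemma distributed_coord:
  assumes "i \<in> S"
  shows "distributed (coeff_space S) lborel (\<lambda>a. a i) (normal_density 0 1)"
proof -
  have m: "(\<lambda>a. a i) \<in> borel_measurable (coeff_space S)"
    unfolding coeff_space_def using assms by measurable
  have "distr (coeff_space S) lborel (\<lambda>a. a i) = distr (coeff_space S) std_normal (\<lambda>a. a i)"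
    by (rule distr_cong) auto
  also have "\<dots> = density lborel (normal_density 0 1)"
    using distr_coord[OF assms] std_normal_alt by simp
  finally show ?thesis unfolding distributed_def using m by simp
qed

lemma distributed_sum:
  assumes "finite S" "I \<subseteq> S" "I \<noteq> {}"
  shows "distributed (coeff_space S) lborel (\<lambda>a. \<Sum>i\<in>I. a i) (normal_density 0 (sqrt (card I)))"
proof -
  have "finite I" using assms finite_subset by blast
  have "distributed (coeff_space S) lborel (\<lambda>a. \<Sum>i\<in>I. a i)
        (normal_density (\<Sum>i\<in>I. 0) (sqrt (\<Sum>i\<in>I. 1\<^sup>2)))"
    using assms \<open>finite I\<close>
    by (intro prob_space.sum_indep_normal[OF prob_P] prob_space.indep_vars_subset[OF prob_P indep_coord]
        distributed_coord) auto
  then show ?thesis by simp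
qed

lemma indep_sum_coord:
  assumes "finite S" "I \<subseteq> S" "m \<in> S" "m \<notin> I"
  shows "prob_space.indep_var (coeff_space S) borel (\<lambda>a. a m) borel (\<lambda>a. \<Sum>i\<in>I. a i)"
proof -
  have "finite I" using assms finite_subset by blast
  show ?thesis
    using assms \<open>finite I\<close>
    by (intro prob_space.indep_vars_sum[OF prob_P] prob_space.indep_vars_subset[OF prob_P indep_coord]) auto
qed


lemma normal_interval_lb:
  fixes c d R \<sigma> :: real
  assumes "0 < \<sigma>" "c \<le> d" "\<And>x. c \<le> x \<Longrightarrow> x \<le> d \<Longrightarrow> x\<^sup>2 \<le> R"
  shows "emeasure (density lborel (normal_density 0 \<sigma>)) {c<..<d}
      \<ge> ennreal ((d - c) * (1 / sqrt (2 * pi * \<sigma>\<^sup>2) * exp (- R / (2 * \<sigma>\<^sup>2))))"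
proof -
  define K where "K = 1 / sqrt (2 * pi * \<sigma>\<^sup>2) * exp (- R / (2 * \<sigma>\<^sup>2))"
  have K0: "K \<ge> 0" unfolding K_def by simp
  have "ennreal ((d - c) * K) = (\<integral>\<^sup>+ x. ennreal K * indicator {c<..<d} x \<partial>lborel)"
    using assms K0 by (simp add: nn_integral_cmult_indicator ennreal_mult' mult.commute)
  also have "\<dots> \<le> (\<integral>\<^sup>+ x. ennreal (normal_density 0 \<sigma> x) * indicator {c<..<d} x \<partial>lborel)"
  proof (intro nn_integral_mono)
    fix x
    show "ennreal K * indicator {c<..<d} x \<le> ennreal (normal_density 0 \<sigma> x) * indicator {c<..<d} x"
    proof (cases "x \<in> {c<..<d}")
      case True
      then have "x\<^sup>2 \<le> R" using assms(3) by auto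
      then have "- R / (2 * \<sigma>\<^sup>2) \<le> - x\<^sup>2 / (2 * \<sigma>\<^sup>2)"
        using assms(1) by (intro divide_right_mono) auto
      then have "K \<le> normal_density 0 \<sigma> x"
        unfolding K_def normal_density_def by (intro mult_left_mono) auto
      then show ?thesis using True by (simp add: ennreal_leI)
    qed simp
  qed
  also have "\<dots> = emeasure (density lborel (normal_density 0 \<sigma>)) {c<..<d}"
    by (simp add: emeasure_density)
  finally show ?thesis unfolding K_def .
qed

lemma tail_N:
  fixes T :: real
  assumes "T > 0"
  shows "emeasure std_normal {x. T < \<bar>x\<bar>} \<le> ennreal (1 / T)"
proof -
  have "emeasure std_normal {x. T < \<bar>x\<bar>} = (\<integral>\<^sup>+ x. ennreal (std_normal_density x) * indicator {x. T < \<bar>x\<bar>} x \<partial>lborel)"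
    unfolding std_normal_def by (simp add: emeasure_density)
  also have "\<dots> \<le> (\<integral>\<^sup>+ x. ennreal (std_normal_density x * \<bar>x\<bar>^(2*0+1) / T) \<partial>lborel)"
  proof (intro nn_integral_mono)
    fix x
    show "ennreal (std_normal_density x) * indicator {x. T < \<bar>x\<bar>} x
        \<le> ennreal (std_normal_density x * \<bar>x\<bar>^(2*0+1) / T)"
    proof (cases "T < \<bar>x\<bar>")
      case True
      have "std_normal_density x * 1 \<le> std_normal_density x * (\<bar>x\<bar> / T)"
        using True assms by (intro mult_left_mono) auto
      then show ?thesis using True by (simp add: ennreal_leI)
    qed simp
  qed
  also have "\<dots> = ennreal (integral\<^sup>L lborel (\<lambda>x. std_normal_density x * \<bar>x\<bar>^(2*0+1) / T))"
    using assms integrable_std_normal_moment_abs[of "2*0+1"]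
    by (intro nn_integral_eq_integral) auto
  also have "integral\<^sup>L lborel (\<lambda>x. std_normal_density x * \<bar>x\<bar>^(2*0+1) / T)
      = sqrt (2 / pi) / T"
    using integral_std_normal_moment_abs_odd[of 0] by simp
  also have "sqrt (2 / pi) \<le> 1"
    using pi_gt3 by (simp add: real_sqrt_le_1_iff)
  then have "ennreal (sqrt (2 / pi) / T) \<le> ennreal (1 / T)"
    using assms by (intro ennreal_leI divide_right_mono) auto
  finally show ?thesis .
qed


lemma sqrt_2pi: "sqrt (2*pi) \<le> 3"
proof -
  have "sqrt (2*pi) \<le> sqrt 9" using pi_less_4 by (subst real_sqrt_le_iff) simp
  also have "sqrt 9 = (3::real)" by (simp add: real_sqrt_eq_iff)
  finally show ?thesis .
qed

lemma probA:
  assumes "finite S" "I \<subseteq> S" "I \<noteq> {}"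
  shows "measure (coeff_space S) {a\<in>space (coeff_space S). (\<Sum>i\<in>I. a i) \<in> {1<..<2}}
     \<ge> exp (-2) / (3 * sqrt (card I))"
proof -
  interpret P: prob_space "coeff_space S" by (rule prob_P)
  have fI: "finite I" using assms finite_subset by blast
  define n where "n = real (card I)"
  have n1: "n \<ge> 1" using fI assms(3) unfolding n_def by (simp add: Suc_le_eq card_gt_0_iff)
  have D: "distributed (coeff_space S) lborel (\<lambda>a. \<Sum>i\<in>I. a i) (normal_density 0 (sqrt n))"
    unfolding n_def by (rule distributed_sum[OF assms])
  have "emeasure (coeff_space S) ((\<lambda>a. \<Sum>i\<in>I. a i) -` {1<..<2} \<inter> space (coeff_space S))
      = emeasure (density lborel (normal_density 0 (sqrt n))) {1<..<2}"
    using distributed_emeasure[OF D, of "{1<..<2}"] by (simp add: emeasure_density)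
  also have "\<dots> \<ge> ennreal ((2 - 1) * (1 / sqrt (2 * pi * (sqrt n)\<^sup>2) * exp (- 4 / (2 * (sqrt n)\<^sup>2))))"
  proof (rule normal_interval_lb)
    show "0 < sqrt n" using n1 by simp
    fix x :: real assume "1 \<le> x" "x \<le> 2"
    then have "x * x \<le> 2 * 2" by (intro mult_mono) auto
    then show "x\<^sup>2 \<le> 4" by (simp add: power2_eq_square)
  qed simp
  finally have 1: "ennreal (1 / sqrt (2 * pi * n) * exp (- 4 / (2 * n))) \<le>
      emeasure (coeff_space S) {a\<in>space (coeff_space S). (\<Sum>i\<in>I. a i) \<in> {1<..<2}}"
    using n1 by (simp add: vimage_def Int_def conj_commute)
  have 2: "exp (-2) / (3 * sqrt n) \<le> 1 / sqrt (2 * pi * n) * exp (- 4 / (2 * n))"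
  proof -
    have e: "exp (-2) \<le> exp (- 4 / (2 * n))" using n1 by (simp add: field_simps)
    have s: "sqrt (2 * pi * n) \<le> 3 * sqrt n"
    proof -
      have "sqrt (2 * pi * n) = sqrt (2*pi) * sqrt n" by (simp add: real_sqrt_mult)
      then show ?thesis using n1 sqrt_2pi by (simp add: mult_right_mono)
    qed
    have p: "sqrt (2 * pi * n) > 0" using n1 by simp
    have "exp (-2) / (3 * sqrt n) \<le> exp (-2) / sqrt (2 * pi * n)"
      using s p n1 by (intro divide_left_mono mult_pos_pos) auto
    also have "\<dots> \<le> exp (- 4 / (2 * n)) / sqrt (2 * pi * n)"
      using e p by (intro divide_right_mono) auto
    finally show ?thesis by simp
  qed
  have 3: "ennreal (exp (-2) / (3 * sqrt n)) \<le>
      emeasure (coeff_space S) {a\<in>space (coeff_space S). (\<Sum>i\<in>I. a i) \<in> {1<..<2}}"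
    using 1 2 order_trans ennreal_leI by blast
  show ?thesis
    using 3 unfolding n_def[symmetric] P.emeasure_eq_measure
    by (simp add: ennreal_le_iff)
qed

lemma probB:
  assumes "m \<in> S"
  shows "measure (coeff_space S) {a\<in>space (coeff_space S). a m \<in> {-4<..<-3}} \<ge> exp (-8) / 3"
proof -
  interpret P: prob_space "coeff_space S" by (rule prob_P)
  have D: "distributed (coeff_space S) lborel (\<lambda>a. a m) (normal_density 0 1)"
    by (rule distributed_coord[OF assms])
  have "emeasure (coeff_space S) ((\<lambda>a. a m) -` {-4<..<-3} \<inter> space (coeff_space S))
      = emeasure (density lborel (normal_density 0 1)) {-4<..<-3}"
    using distributed_emeasure[OF D, of "{-4<..<-3}"] by (simp add: emeasure_density)
  also have "\<dots> \<ge> ennreal ((-3 - -4) * (1 / sqrt (2 * pi * 1\<^sup>2) * exp (- 16 / (2 * 1\<^sup>2))))"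
  proof (rule normal_interval_lb)
    fix x :: real assume "-4 \<le> x" "x \<le> -3"
    then have "(-x) * (-x) \<le> 4 * 4" by (intro mult_mono) auto
    then show "x\<^sup>2 \<le> 16" by (simp add: power2_eq_square)
  qed simp_all
  finally have 1: "ennreal (1 / sqrt (2 * pi) * exp (- 8)) \<le>
      emeasure (coeff_space S) {a\<in>space (coeff_space S). a m \<in> {-4<..<-3}}"
    by (simp add: vimage_def Int_def conj_commute)
  have 2: "exp (-8) / 3 \<le> 1 / sqrt (2 * pi) * exp (- 8)"
  proof -
    have "exp (-8) / 3 \<le> exp (-8) / sqrt (2*pi)"
      using sqrt_2pi by (intro divide_left_mono) auto
    then show ?thesis by simp
  qed
  have 3: "ennreal (exp (-8) / 3) \<le>
      emeasure (coeff_space S) {a\<in>space (coeff_space S). a m \<in> {-4<..<-3}}"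
    using 1 2 order_trans ennreal_leI by blast
  show ?thesis
    using 3 unfolding P.emeasure_eq_measure
    by (simp add: ennreal_le_iff)
qed


lemma comp_pred_sets:
  assumes "i \<in> S" "Measurable.pred borel Q"
  shows "{a\<in>space (coeff_space S). Q (a i)} \<in> sets (coeff_space S)"
  unfolding coeff_space_def using assms by measurable

lemma ball_sets:
  assumes "finite S"
  shows "{a\<in>space (coeff_space S). \<forall>i\<in>S. \<bar>a i\<bar> \<le> T} \<in> sets (coeff_space S)"
proof (cases "S = {}")
  case True then show ?thesis by simp
next
  case False
  have "{a\<in>space (coeff_space S). \<forall>i\<in>S. \<bar>a i\<bar> \<le> T}
     = (\<Inter>i\<in>S. {a\<in>space (coeff_space S). \<bar>a i\<bar> \<le> T})" using False by auto
  also have "\<dots> \<in> sets (coeff_space S)"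
    using False assms by (intro sets.finite_INT comp_pred_sets) auto
  finally show ?thesis .
qed

lemma bex_sets:
  assumes "finite S"
  shows "{a\<in>space (coeff_space S). \<exists>i\<in>S. T < \<bar>a i\<bar>} \<in> sets (coeff_space S)"
proof -
  have "{a\<in>space (coeff_space S). \<exists>i\<in>S. T < \<bar>a i\<bar>}
     = (\<Union>i\<in>S. {a\<in>space (coeff_space S). T < \<bar>a i\<bar>})" by auto
  also have "\<dots> \<in> sets (coeff_space S)"
    using assms by (intro sets.finite_UN comp_pred_sets) auto
  finally show ?thesis .
qed

lemma prob_bad:
  assumes "finite S" "T > 0"
  shows "measure (coeff_space S) {a\<in>space (coeff_space S). \<exists>i\<in>S. T < \<bar>a i\<bar>} \<le> card S / T"
proof -
  interpret P: prob_space "coeff_space S" by (rule prob_P)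
  interpret N: prob_space std_normal by (rule prob_N)
  have meas: "(\<lambda>a. a i) \<in> measurable (coeff_space S) std_normal" if "i \<in> S" for i
    unfolding coeff_space_def using that by measurable
  have each: "measure (coeff_space S) {a\<in>space (coeff_space S). T < \<bar>a i\<bar>} \<le> 1 / T" if "i \<in> S" for i
  proof -
    have "measure (coeff_space S) {a\<in>space (coeff_space S). T < \<bar>a i\<bar>}
        = measure (distr (coeff_space S) std_normal (\<lambda>a. a i)) {x. T < \<bar>x\<bar>}"
      by (subst measure_distr[OF meas[OF that]]) (auto intro!: arg_cong[where f="measure _"])
    also have "\<dots> = measure std_normal {x. T < \<bar>x\<bar>}" using distr_coord[OF that] by simp
    also have "\<dots> \<le> 1 / T"
      using tail_N[OF assms(2)] assms(2) by (simp add: N.emeasure_eq_measure ennreal_le_iff)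
    finally show ?thesis .
  qed
  have "{a\<in>space (coeff_space S). \<exists>i\<in>S. T < \<bar>a i\<bar>}
      = (\<Union>i\<in>S. {a\<in>space (coeff_space S). T < \<bar>a i\<bar>})" by auto
  also have "measure (coeff_space S) \<dots> \<le> (\<Sum>i\<in>S. measure (coeff_space S) {a\<in>space (coeff_space S). T < \<bar>a i\<bar>})"
  proof (rule P.finite_measure_subadditive_finite[OF assms(1)])
    show "(\<lambda>i. {a \<in> space (coeff_space S). T < \<bar>a i\<bar>}) ` S \<subseteq> P.events"
      by (auto intro!: comp_pred_sets)
  qed
  also have "\<dots> \<le> (\<Sum>i\<in>S. 1 / T)" using each by (intro sum_mono) auto
  also have "\<dots> = card S / T" by simp
  finally show ?thesis .
qed

lemma prob_event:
  assumes "finite S" "I \<subseteq> S" "I \<noteq> {}" "m \<in> S" "m \<notin> I" "T > 0"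
  shows "measure (coeff_space S) {a\<in>space (coeff_space S). (\<Sum>i\<in>I. a i) \<in> {1<..<2} \<and>
            a m \<in> {-4<..<-3} \<and> (\<forall>i\<in>S. \<bar>a i\<bar> \<le> T)}
         \<ge> exp (-10) / (9 * sqrt (card I)) - card S / T"
proof -
  interpret P: prob_space "coeff_space S" by (rule prob_P)
  define E0 where "E0 = {a\<in>space (coeff_space S). (\<Sum>i\<in>I. a i) \<in> {1<..<2} \<and> a m \<in> {-4<..<-3}}"
  define E where "E = {a\<in>space (coeff_space S). (\<Sum>i\<in>I. a i) \<in> {1<..<2} \<and>
            a m \<in> {-4<..<-3} \<and> (\<forall>i\<in>S. \<bar>a i\<bar> \<le> T)}"
  define B where "B = {a\<in>space (coeff_space S). \<exists>i\<in>S. T < \<bar>a i\<bar>}"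
  have fI: "finite I" using assms finite_subset by blast
  have ind: "P.indep_var borel (\<lambda>a. a m) borel (\<lambda>a. \<Sum>i\<in>I. a i)"
    by (rule indep_sum_coord) (use assms in auto)
  have "P.prob ((\<lambda>x. (x m, \<Sum>i\<in>I. x i)) -` ({-4<..<-3} \<times> {1<..<2}) \<inter> space (coeff_space S))
      = P.prob ((\<lambda>a. a m) -` {-4<..<-3} \<inter> space (coeff_space S)) *
        P.prob ((\<lambda>a. \<Sum>i\<in>I. a i) -` {1<..<2} \<inter> space (coeff_space S))"
    by (rule P.indep_varD[OF ind]) auto
  then have E0eq: "P.prob E0 = P.prob {a\<in>space (coeff_space S). a m \<in> {-4<..<-3}} *
        P.prob {a\<in>space (coeff_space S). (\<Sum>i\<in>I. a i) \<in> {1<..<2}}"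
    unfolding E0_def by (simp add: vimage_def Int_def conj_commute)
  have "exp (-10) / (9 * sqrt (card I)) = (exp (-8) / 3) * (exp (-2) / (3 * sqrt (card I)))"
    by (simp add: exp_add[symmetric])
  also have "\<dots> \<le> P.prob E0"
    unfolding E0eq using probA[OF assms(1-3)] probB[OF assms(4)]
    by (intro mult_mono) auto
  finally have 1: "exp (-10) / (9 * sqrt (card I)) \<le> P.prob E0" .
  have sum_sets: "{a\<in>space (coeff_space S). (\<Sum>i\<in>I. a i) \<in> {1<..<2}} \<in> P.events"
    unfolding coeff_space_def apply measurable using assms(2) by blast
  have "E = {a\<in>space (coeff_space S). (\<Sum>i\<in>I. a i) \<in> {1<..<2}} \<inter>
      {a\<in>space (coeff_space S). a m \<in> {-4<..<-3}} \<inter> {a\<in>space (coeff_space S). \<forall>i\<in>S. \<bar>a i\<bar> \<le> T}"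
    unfolding E_def by auto
  also have "\<dots> \<in> P.events"
    using sum_sets assms by (intro sets.Int comp_pred_sets ball_sets) auto
  finally have ev: "E \<in> P.events" "B \<in> P.events"
    using bex_sets assms unfolding B_def by auto
  have "P.prob E0 \<le> P.prob (E \<union> B)"
    using ev by (intro P.finite_measure_mono) (auto simp: E0_def E_def B_def not_less)
  also have "\<dots> \<le> P.prob E + P.prob B" using ev by (intro measure_subadditive) auto
  finally have 2: "P.prob E0 \<le> P.prob E + P.prob B" .
  have 3: "P.prob B \<le> card S / T" unfolding B_def by (rule prob_bad[OF assms(1,6)])
  show ?thesis using 1 2 3 unfolding E_def[symmetric] by linarith
qed


lemma pow_lower:
  fixes t :: real assumes "0 \<le> t" "t \<le> 1"
  shows "1 - real n * t \<le> (1 - t) ^ n"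
  using Bernoulli_inequality[of "-t" n] assms by simp

lemma pow_upper:
  fixes t :: real assumes "0 < t" "t < 1" "n > 0"
  shows "(1 - t) ^ n \<le> 1 / (real n * t)"
proof -
  have "(1 - t) ^ n * (1 + t) ^ n = (1 - t\<^sup>2) ^ n"
    by (simp add: power_mult_distrib[symmetric] power2_eq_square algebra_simps)
  also have "\<dots> \<le> 1" using assms by (intro power_le_one) (auto simp: power2_eq_square mult_le_one)
  finally have 1: "(1 - t) ^ n * (1 + t) ^ n \<le> 1" .
  have 2: "real n * t \<le> (1 + t) ^ n" using Bernoulli_inequality[of t n] assms by simp
  have 3: "(1 - t) ^ n * (real n * t) \<le> (1 - t) ^ n * (1 + t) ^ n"
    using 2 assms by (intro mult_left_mono) auto
  have "0 < real n * t" using assms by simp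
  then show ?thesis using 1 3 by (simp add: field_simps)
qed

definition Tk :: "nat \<Rightarrow> real" where "Tk k = real ((k+2)^2)"
definition dk :: "nat \<Rightarrow> real" where "dk k = 1 / (2 * real (k+2) * Tk k)"
definition Mk :: "nat \<Rightarrow> nat" where "Mk k = nat \<lceil>1 / (dk k)\<^sup>2\<rceil> + 2"
definition ek :: "nat \<Rightarrow> nat \<Rightarrow> nat" where "ek k i = Mk k ^ i"
definition xk :: "nat \<Rightarrow> nat \<Rightarrow> real" where "xk k j = 1 - dk k / real (Mk k) ^ (j - 1)"
definition Sk :: "nat \<Rightarrow> nat set" where "Sk k = ek k ` {..<k+2}"

lemma Tk_pos: "Tk k > 0" unfolding Tk_def by simp
lemma dk_pos: "dk k > 0" unfolding dk_def using Tk_pos[of k] by simp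
lemma dk_less: "dk k < 1"
proof -
  have T1: "Tk k \<ge> 1" unfolding Tk_def by simp
  have "2 * Tk k \<le> 2 * real (k+2) * Tk k" using T1 by (intro mult_right_mono) auto
  then have "2 * real (k+2) * Tk k > 1" using T1 by linarith
  then show ?thesis unfolding dk_def by simp
qed
lemma Mk_ge2: "Mk k \<ge> 2" unfolding Mk_def by simp
lemma Mk_pos [simp]: "0 < Mk k" using Mk_ge2[of k] by simp
lemma Mk_big: "real (Mk k) * (dk k)\<^sup>2 \<ge> 1"
proof -
  have "real (Mk k) \<ge> 1 / (dk k)\<^sup>2"
    unfolding Mk_def using real_nat_ceiling_ge[of "1 / (dk k)\<^sup>2"] by linarith
  then show ?thesis using dk_pos[of k] by (simp add: field_simps)
qed

lemma ek_inj: "inj_on (ek k) A"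
  using Mk_ge2[of k] unfolding ek_def by (intro inj_onI) (simp add: power_inject_exp)

lemma card_Sk: "card (Sk k) = k + 2" "finite (Sk k)"
  unfolding Sk_def using ek_inj by (simp_all add: card_image)

lemma weight:
  assumes "j \<ge> 1"
  shows "\<bar>xk k j ^ ek k i - (if i < j then 1 else 0)\<bar> \<le> dk k"
proof -
  define d where "d = dk k"
  define M where "M = real (Mk k)"
  define t where "t = d / M ^ (j - 1)"
  have d0: "0 < d" "d < 1" using dk_pos dk_less unfolding d_def by auto
  have M2: "M \<ge> 2" using Mk_ge2[of k] unfolding M_def by simp
  have Md: "M * d\<^sup>2 \<ge> 1" using Mk_big[of k] unfolding M_def d_def .
  have Mp: "M ^ (j-1) \<ge> 1" using M2 by simp
  have t0: "0 < t" "t \<le> d" using d0 Mp unfolding t_def by (auto simp: field_simps)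
  have x: "xk k j = 1 - t" unfolding xk_def t_def d_def M_def by simp
  have e: "real (ek k i) = M ^ i" unfolding ek_def M_def by simp
  show ?thesis
  proof (cases "i < j")
    case True
    have "M ^ i \<le> M ^ (j - 1)" using True M2 by (intro power_increasing) auto
    then have nt: "real (ek k i) * t \<le> d"
      unfolding e t_def using d0 Mp by (simp add: field_simps mult_right_mono)
    have "1 - d \<le> (1 - t) ^ ek k i"
      using pow_lower[of t "ek k i"] t0 d0 nt by simp
    moreover have "(1 - t) ^ ek k i \<le> 1" using t0 d0 by (intro power_le_one) auto
    ultimately show ?thesis using True unfolding x d_def[symmetric] by simp
  next
    case False
    have "M ^ i \<ge> M ^ (j - 1) * M"
    proof -
      have "M ^ (j - 1) * M = M ^ Suc (j - 1)" by simp
      also have "\<dots> \<le> M ^ i" using False assms M2 by (intro power_increasing) auto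
      finally show ?thesis .
    qed
    then have nt: "real (ek k i) * t \<ge> M * d"
      unfolding e t_def using d0 Mp by (simp add: field_simps mult_right_mono)
    have pos: "ek k i > 0" unfolding ek_def using Mk_ge2[of k] by simp
    have "(1 - t) ^ ek k i \<le> 1 / (real (ek k i) * t)"
      using pow_upper[of t "ek k i"] t0 d0 pos by simp
    also have "\<dots> \<le> 1 / (M * d)"
    proof -
      have "0 < M * d" using d0 M2 by simp
      then show ?thesis using nt by (intro divide_left_mono) (auto intro: mult_pos_pos)
    qed
    also have "\<dots> \<le> d" using Md d0 M2 by (simp add: field_simps power2_eq_square)
    finally have "(1 - t) ^ ek k i \<le> d" .
    moreover have "0 \<le> (1 - t) ^ ek k i" using t0 d0 by simp
    ultimately show ?thesis using False unfolding x d_def[symmetric] by simp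
  qed
qed

lemma xk_mono:
  assumes "1 \<le> j" "j < j'"
  shows "xk k j < xk k j'"
proof -
  have M2: "real (Mk k) \<ge> 2" using Mk_ge2[of k] by simp
  have "real (Mk k) ^ (j - 1) < real (Mk k) ^ (j' - 1)"
    using assms M2 by (intro power_strict_increasing) auto
  moreover have "0 < real (Mk k) ^ (j - 1)" using M2 by simp
  ultimately have "dk k / real (Mk k) ^ (j' - 1) < dk k / real (Mk k) ^ (j - 1)"
    using dk_pos[of k] by (intro divide_strict_left_mono) auto
  then show ?thesis unfolding xk_def by simp
qed

lemma xk_range:
  shows "0 < xk k j" "xk k j < 1"
proof -
  have M2: "real (Mk k) \<ge> 2" using Mk_ge2[of k] by simp
  have Mp: "real (Mk k) ^ (j - 1) \<ge> 1" using M2 by simp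
  have "dk k / real (Mk k) ^ (j - 1) \<le> dk k / 1" using Mp dk_pos[of k] by (intro divide_left_mono) auto
  then have "dk k / real (Mk k) ^ (j - 1) \<le> dk k" by simp
  then show "0 < xk k j" using dk_less[of k] unfolding xk_def by linarith
  show "xk k j < 1" using dk_pos[of k] Mp unfolding xk_def by simp
qed


lemma rand_poly_Sk: "rand_poly (Sk k) a x = (\<Sum>i<k+2. a (ek k i) * x ^ ek k i)"
  unfolding rand_poly_def Sk_def by (simp add: sum.reindex ek_inj)

lemma approx:
  assumes "1 \<le> j" "j \<le> k + 2" "\<forall>i<k+2. \<bar>a (ek k i)\<bar> \<le> Tk k"
  shows "\<bar>rand_poly (Sk k) a (xk k j) - (\<Sum>i<j. a (ek k i))\<bar> \<le> 1/2"
proof -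
  define w where "w i = (if i < j then 1 else 0 :: real)" for i
  have s: "(\<Sum>i<j. a (ek k i)) = (\<Sum>i<k+2. a (ek k i) * w i)"
  proof -
    have "(\<Sum>i<k+2. a (ek k i) * w i) = (\<Sum>i<k+2. if i < j then a (ek k i) else 0)"
      unfolding w_def by (intro sum.cong) auto
    also have "\<dots> = (\<Sum>i\<in>{i\<in>{..<k+2}. i < j}. a (ek k i))"
      by (rule sum.inter_filter[symmetric]) simp
    also have "{i\<in>{..<k+2}. i < j} = {..<j}" using assms by auto
    finally show ?thesis by simp
  qed
  have "rand_poly (Sk k) a (xk k j) - (\<Sum>i<j. a (ek k i))
      = (\<Sum>i<k+2. a (ek k i) * (xk k j ^ ek k i - w i))"
    unfolding rand_poly_Sk s sum_subtractf[symmetric] right_diff_distrib ..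
  also have "\<bar>\<dots>\<bar> \<le> (\<Sum>i<k+2. \<bar>a (ek k i) * (xk k j ^ ek k i - w i)\<bar>)"
    by (rule sum_abs)
  also have "\<dots> \<le> (\<Sum>i<k+2. Tk k * dk k)"
  proof (intro sum_mono)
    fix i assume "i \<in> {..<k+2}"
    then have "\<bar>a (ek k i)\<bar> \<le> Tk k" using assms by auto
    moreover have "\<bar>xk k j ^ ek k i - w i\<bar> \<le> dk k" unfolding w_def using weight[OF assms(1)] .
    ultimately show "\<bar>a (ek k i) * (xk k j ^ ek k i - w i)\<bar> \<le> Tk k * dk k"
      unfolding abs_mult by (intro mult_mono) auto
  qed
  also have "\<dots> = 1/2" unfolding dk_def using Tk_pos[of k] by simp
  finally show ?thesis .
qed

lemma rand_poly_poly: "rand_poly S a x = poly (\<Sum>e\<in>S. monom (a e) e) x"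
  unfolding rand_poly_def by (simp add: poly_sum poly_monom)

lemma count_zeros:
  fixes a :: "nat \<Rightarrow> real" and k :: nat
  defines "Ev \<equiv> \<lambda>j. (\<Sum>i\<in>ek k ` {..<j}. a i) \<in> {1<..<2} \<and> a (ek k j) \<in> {-4<..<-3} \<and>
            (\<forall>i\<in>Sk k. \<bar>a i\<bar> \<le> Tk k)"
  shows "card {j\<in>{1..k}. Ev j} \<le> card {x\<in>{0<..<1}. rand_poly (Sk k) a x = 0}"
proof -
  define J where "J = {j\<in>{1..k}. Ev j}"
  define Z where "Z = {x\<in>{0<..<1}. rand_poly (Sk k) a x = 0}"
  define f where "f = rand_poly (Sk k) a"
  have cont: "continuous_on A f" for A
    unfolding f_def rand_poly_def by (intro continuous_intros)
  have root: "\<exists>z. xk k j < z \<and> z < xk k (Suc j) \<and> f z = 0" if "j \<in> J" for j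
  proof -
    have j: "1 \<le> j" "j \<le> k" "Ev j" using that unfolding J_def by auto
    have bnd: "\<forall>i<k+2. \<bar>a (ek k i)\<bar> \<le> Tk k" using j(3) unfolding Ev_def Sk_def by auto
    have sj: "(\<Sum>i\<in>ek k ` {..<j}. a i) = (\<Sum>i<j. a (ek k i))" by (simp add: sum.reindex ek_inj)
    have s1: "(\<Sum>i<j. a (ek k i)) \<in> {1<..<2}" "a (ek k j) < -3"
      using j(3) unfolding Ev_def sj by auto
    have "\<bar>f (xk k j) - (\<Sum>i<j. a (ek k i))\<bar> \<le> 1/2"
      unfolding f_def by (rule approx) (use j bnd in auto)
    then have pos: "f (xk k j) > 0" using s1 abs_le_D2 by fastforce
    have "\<bar>f (xk k (Suc j)) - (\<Sum>i<Suc j. a (ek k i))\<bar> \<le> 1/2"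
      unfolding f_def by (rule approx) (use j bnd in auto)
    then have neg: "f (xk k (Suc j)) < 0" using s1 abs_le_D1 by fastforce
    have lt: "xk k j < xk k (Suc j)" using j by (intro xk_mono) auto
    obtain z where z: "xk k j \<le> z" "z \<le> xk k (Suc j)" "f z = 0"
      using IVT2'[of f "xk k (Suc j)" 0 "xk k j"] neg pos lt cont by auto
    then have "z \<noteq> xk k j" "z \<noteq> xk k (Suc j)" using pos neg by auto
    then have "xk k j < z" "z < xk k (Suc j)" using z by (auto simp: less_le)
    then show ?thesis using z(3) by blast
  qed
  then obtain r where r: "\<And>j. j \<in> J \<Longrightarrow> xk k j < r j \<and> r j < xk k (Suc j) \<and> f (r j) = 0"
    by metis
  show ?thesis
  proof (cases "J = {}")
    case True then show ?thesis unfolding J_def[symmetric] by simp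
  next
    case False
    then obtain j0 where j0: "j0 \<in> J" by auto
    have "f (xk k j0) \<noteq> 0"
    proof -
      have j: "1 \<le> j0" "j0 \<le> k" "Ev j0" using j0 unfolding J_def by auto
      have bnd: "\<forall>i<k+2. \<bar>a (ek k i)\<bar> \<le> Tk k" using j(3) unfolding Ev_def Sk_def by auto
      have sj: "(\<Sum>i\<in>ek k ` {..<j0}. a i) = (\<Sum>i<j0. a (ek k i))" by (simp add: sum.reindex ek_inj)
      have "\<bar>f (xk k j0) - (\<Sum>i<j0. a (ek k i))\<bar> \<le> 1/2"
        unfolding f_def by (rule approx) (use j bnd in auto)
      then show ?thesis using j(3) abs_le_D2 unfolding Ev_def sj by fastforce
    qed
    then have p0: "(\<Sum>e\<in>Sk k. monom (a e) e) \<noteq> 0"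
      unfolding f_def rand_poly_poly by auto
    have finZ: "finite Z"
      by (rule finite_subset[OF _ poly_roots_finite[OF p0]]) (auto simp: Z_def rand_poly_poly)
    have sub: "r ` J \<subseteq> Z"
    proof
      fix z assume "z \<in> r ` J"
      then obtain j where j: "j \<in> J" "z = r j" by auto
      have "0 < xk k j" "xk k (Suc j) < 1" using xk_range by auto
      then show "z \<in> Z" using r[OF j(1)] j unfolding Z_def f_def by auto
    qed
    have inj: "inj_on r J"
    proof (rule inj_onI)
      fix j j' assume jj: "j \<in> J" "j' \<in> J" "r j = r j'"
      show "j = j'"
      proof (rule ccontr)
        assume "j \<noteq> j'"
        then consider "j < j'" | "j' < j" by linarith
        then show False
        proof cases
          case 1
          have "xk k (Suc j) \<le> xk k j'"
            using 1 jj(1) xk_mono[of "Suc j" j' k] unfolding J_def by (cases "Suc j = j'") auto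
          then show False using r[OF jj(1)] r[OF jj(2)] jj(3) by auto
        next
          case 2
          have "xk k (Suc j') \<le> xk k j"
            using 2 jj(2) xk_mono[of "Suc j'" j k] unfolding J_def by (cases "Suc j' = j") auto
          then show False using r[OF jj(1)] r[OF jj(2)] jj(3) by auto
        qed
      qed
    qed
    have "card J = card (r ` J)" using inj by (simp add: card_image)
    also have "\<dots> \<le> card Z" using finZ sub by (rule card_mono)
    finally show ?thesis unfolding J_def Z_def .
  qed
qed


lemma event_sets:
  assumes "finite S" "I \<subseteq> S" "m \<in> S"
  shows "{a\<in>space (coeff_space S). (\<Sum>i\<in>I. a i) \<in> {1<..<2} \<and>
            a m \<in> {-4<..<-3} \<and> (\<forall>i\<in>S. \<bar>a i\<bar> \<le> T)} \<in> sets (coeff_space S)"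
proof -
  have sum_sets: "{a\<in>space (coeff_space S). (\<Sum>i\<in>I. a i) \<in> {1<..<2}} \<in> sets (coeff_space S)"
    unfolding coeff_space_def apply measurable using assms(2) by blast
  have "{a\<in>space (coeff_space S). (\<Sum>i\<in>I. a i) \<in> {1<..<2} \<and>
            a m \<in> {-4<..<-3} \<and> (\<forall>i\<in>S. \<bar>a i\<bar> \<le> T)}
     = {a\<in>space (coeff_space S). (\<Sum>i\<in>I. a i) \<in> {1<..<2}} \<inter>
      {a\<in>space (coeff_space S). a m \<in> {-4<..<-3}} \<inter> {a\<in>space (coeff_space S). \<forall>i\<in>S. \<bar>a i\<bar> \<le> T}"
    by auto
  also have "\<dots> \<in> sets (coeff_space S)"
    using sum_sets assms by (intro sets.Int comp_pred_sets ball_sets) auto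
  finally show ?thesis .
qed

lemma div_sq: "(y::real) \<noteq> 0 \<Longrightarrow> y / (y * y) = 1 / y"
proof -
  assume "y \<noteq> 0"
  have "y / (y * y) = y / y / y" by (simp only: divide_divide_eq_left)
  also have "\<dots> = 1 / y" using \<open>y \<noteq> 0\<close> by simp
  finally show ?thesis .
qed

lemma main_bound:
  assumes k: "k \<ge> 1"
  shows "ennreal (exp (-10) / 9 * sqrt (real k) - 1) \<le> exp_zeros (Sk k)"
proof -
  define c0 where "c0 = exp (-10) / (9::real)"
  define P where "P = coeff_space (Sk k)"
  interpret P: prob_space P unfolding P_def by (rule prob_P)
  define E where "E j = {a\<in>space P. (\<Sum>i\<in>ek k ` {..<j}. a i) \<in> {1<..<2} \<and>
            a (ek k j) \<in> {-4<..<-3} \<and> (\<forall>i\<in>Sk k. \<bar>a i\<bar> \<le> Tk k)}" for j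
  have finS: "finite (Sk k)" "card (Sk k) = k + 2" using card_Sk by auto
  have Esets: "E j \<in> P.events" if "j \<in> {1..k}" for j
    unfolding E_def P_def using that finS
    by (intro event_sets) (auto simp: Sk_def)
  have Eprob: "P.prob (E j) \<ge> c0 / sqrt j - 1 / (k+2)" if "j \<in> {1..k}" for j
  proof -
    have cI: "card (ek k ` {..<j}) = j" by (simp add: card_image ek_inj)
    have "P.prob (E j) \<ge> exp (-10) / (9 * sqrt (card (ek k ` {..<j}))) - card (Sk k) / Tk k"
      unfolding E_def P_def
    proof (rule prob_event)
      show "ek k ` {..<j} \<subseteq> Sk k" using that unfolding Sk_def by auto
      have "0 \<in> {..<j}" using that by auto
      then show "ek k ` {..<j} \<noteq> {}" by blast
      show "ek k j \<in> Sk k" using that unfolding Sk_def by auto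
      show "ek k j \<notin> ek k ` {..<j}" using ek_inj[of k UNIV] by (auto simp: inj_on_def)
    qed (use finS Tk_pos in auto)
    also have "card (Sk k) / Tk k = 1 / real (k+2)"
    proof -
      have 1: "real (card (Sk k)) / Tk k = real (k+2) / (real (k+2) * real (k+2))"
        unfolding finS Tk_def by (simp only: power2_eq_square of_nat_mult)
      have 2: "real (k+2) / (real (k+2) * real (k+2)) = 1 / real (k+2)"
        by (rule div_sq) simp
      show ?thesis using 1 2 by simp
    qed
    finally show ?thesis unfolding cI c0_def by simp
  qed
  have "(\<integral>\<^sup>+ a. (\<Sum>j\<in>{1..k}. indicator (E j) a) \<partial>P) \<le> exp_zeros (Sk k)"
    unfolding exp_zeros_def exp_zeros_in_def P_def[symmetric]
  proof (rule nn_integral_mono)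
    fix a assume a: "a \<in> space P"
    have "(\<Sum>j\<in>{1..k}. indicator (E j) a :: ennreal) = of_nat (card ({1..k} \<inter> {j. a \<in> E j}))"
      unfolding indicator_def by simp
    also have "{1..k} \<inter> {j. a \<in> E j} = {j\<in>{1..k}. (\<Sum>i\<in>ek k ` {..<j}. a i) \<in> {1<..<2} \<and>
            a (ek k j) \<in> {-4<..<-3} \<and> (\<forall>i\<in>Sk k. \<bar>a i\<bar> \<le> Tk k)}"
      using a unfolding E_def by auto
    also have "of_nat (card \<dots>) \<le> (of_nat (card {x\<in>{0<..<1}. rand_poly (Sk k) a x = 0}) :: ennreal)"
      by (intro of_nat_mono count_zeros)
    finally show "(\<Sum>j\<in>{1..k}. indicator (E j) a) \<le> ennreal (real (card {x\<in>{0<..<1}. rand_poly (Sk k) a x = 0}))"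
      by (simp add: ennreal_of_nat_eq_real_of_nat)
  qed
  moreover have "(\<integral>\<^sup>+ a. (\<Sum>j\<in>{1..k}. indicator (E j) a) \<partial>P) = (\<Sum>j\<in>{1..k}. emeasure P (E j))"
    using Esets by (subst nn_integral_sum) auto
  moreover have "(\<Sum>j\<in>{1..k}. emeasure P (E j)) = ennreal (\<Sum>j\<in>{1..k}. P.prob (E j))"
    by (simp add: P.emeasure_eq_measure)
  moreover have "c0 * sqrt k - 1 \<le> (\<Sum>j\<in>{1..k}. P.prob (E j))"
  proof -
    have "(\<Sum>j\<in>{1..k}. c0 / sqrt k - 1 / k) \<le> (\<Sum>j\<in>{1..k}. P.prob (E j))"
    proof (intro sum_mono)
      fix j assume j: "j \<in> {1..k}"
      have "c0 / sqrt k \<le> c0 / sqrt j"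
        using j unfolding c0_def by (intro divide_left_mono) auto
      moreover have "1 / (2 + real k) \<le> 1 / k" using k by (intro divide_left_mono) auto
      moreover have "c0 / sqrt j - 1 / (2 + real k) \<le> P.prob (E j)" using Eprob[OF j] by (simp add: add.commute)
      ultimately show "c0 / sqrt k - 1 / k \<le> P.prob (E j)" by linarith
    qed
    moreover have "(\<Sum>j\<in>{1..k}. c0 / sqrt k - 1 / k) = c0 * sqrt k - 1"
    proof -
      have "(\<Sum>j\<in>{1..k}. c0 / sqrt k - 1 / k) = real k * (c0 / sqrt k - 1 / k)" by simp
      also have "\<dots> = c0 * (real k / sqrt k) - 1" using k by (simp add: field_simps)
      also have "real k / sqrt k = sqrt k" using k by (simp add: real_div_sqrt)
      finally show ?thesis .
    qed
    ultimately show ?thesis by simp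
  qed
  ultimately show ?thesis unfolding c0_def
    by (smt (verit) ennreal_leI order_trans)
qed

theorem theorem1p3:
  shows "\<exists>c::real. c > 0 \<and> (\<exists>S :: nat \<Rightarrow> nat set.
           (\<forall>k\<ge>1. finite (S k) \<and> card (S k) = k + 2) \<and>
           (\<forall>\<^sub>F k in sequentially. ennreal (c * sqrt (real k)) \<le> exp_zeros (S k)))"
proof -
  define c0 where "c0 = exp (-10) / (9::real)"
  have c0: "c0 > 0" unfolding c0_def by simp
  define K where "K = nat \<lceil>(2 / c0)\<^sup>2\<rceil> + 1"
  have ev: "ennreal (c0 / 2 * sqrt (real k)) \<le> exp_zeros (Sk k)" if "k \<ge> K" for k
  proof -
    have k1: "k \<ge> 1" using that unfolding K_def by simp
    have "(2 / c0)\<^sup>2 \<le> real k"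
      using that real_nat_ceiling_ge[of "(2 / c0)\<^sup>2"] unfolding K_def by linarith
    then have "sqrt ((2 / c0)\<^sup>2) \<le> sqrt (real k)" by (rule real_sqrt_le_mono)
    then have "2 / c0 \<le> sqrt k" using c0 by simp
    then have "2 \<le> c0 * sqrt k" using c0 by (simp add: field_simps)
    then have "c0 / 2 * sqrt k \<le> c0 * sqrt k - 1" by simp
    then have "ennreal (c0 / 2 * sqrt k) \<le> ennreal (c0 * sqrt k - 1)" by (rule ennreal_leI)
    also have "\<dots> \<le> exp_zeros (Sk k)" using main_bound[OF k1] unfolding c0_def by simp
    finally show ?thesis .
  qed
  show ?thesis
  proof (intro exI conjI)
    show "c0 / 2 > 0" using c0 by simp
    show "\<forall>k\<ge>1. finite (Sk k) \<and> card (Sk k) = k + 2" using card_Sk by auto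
    show "\<forall>\<^sub>F k in sequentially. ennreal (c0 / 2 * sqrt (real k)) \<le> exp_zeros (Sk k)"
      using ev by (intro eventually_sequentiallyI) auto
  qed
qed

end
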